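(* For every $\varepsilon\in(0,1]$ there exists $b_0$ such that for every $b\geq b_0$ there exists $n_0$ such that for every $n\geq n_0$ the following holds. Let $G$ be an $(n,\varepsilon)$-digraph and $A\subseteq V(G)$ with $|A|\leq\frac n{\log^2n}$. Then there is a $b$-normal perfect fractional matching $\mathbf{z}$ of $G-A$ with $h(\mathbf{z})\geq h(G)-\varepsilon n$.
   Context: $\log=\log_2$. Digraphs have no loops and at most one edge from $v$ to $w$ per ordered pair. An $(n,\varepsilon)$-digraph is a digraph on $n$ vertices with every in- and out-degree at least $(\frac12+\varepsilon)n$. A perfect fractional matching of a digraph $H$ is $\mathbf{x}\colon E(H)\to\mathbb{R}_{\geq0}$ with $\sum_{w\in N^+(v)}\mathbf{x}_{vw}=1=\sum_{w\in N^-(v)}\mathbf{x}_{wv}$ for all $v$; it is $b$-normal if $\frac1{b|V(H)|}\leq\mathbf{x}_e\leq\frac b{|V(H)|}$ for all edges $e$. $h(\mathbf{x})=\sum_e\mathbf{x}_e\log\frac1{\mathbf{x}_e}$ and $h(G)$ is the maximum of $h(\mathbf{x})$ over perfect fractional matchings $\mathbf{x}$ of $G$. $G-A$ is the subdigraph induced by $V(G)\setminus A$. *)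

theory Defs
  imports "HOL-Analysis.Analysis"
begin

definition digraph :: "'a set \<Rightarrow> ('a \<times> 'a) set \<Rightarrow> bool" where
  "digraph V E \<longleftrightarrow> finite V \<and> E \<subseteq> V \<times> V \<and> (\<forall>v. (v, v) \<notin> E)"

definition out_nbrs :: "('a \<times> 'a) set \<Rightarrow> 'a \<Rightarrow> 'a set" where
  "out_nbrs E v = {w. (v, w) \<in> E}"

definition in_nbrs :: "('a \<times> 'a) set \<Rightarrow> 'a \<Rightarrow> 'a set" where
  "in_nbrs E v = {w. (w, v) \<in> E}"

definition n_eps_digraph :: "nat \<Rightarrow> real \<Rightarrow> 'a set \<Rightarrow> ('a \<times> 'a) set \<Rightarrow> bool" where
  "n_eps_digraph n eps V E \<longleftrightarrow> digraph V E \<and> card V = n \<and>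
     (\<forall>v\<in>V. real (card (out_nbrs E v)) \<ge> (1/2 + eps) * real n \<and>
             real (card (in_nbrs E v)) \<ge> (1/2 + eps) * real n)"

definition del_vertices_E :: "'a set \<Rightarrow> ('a \<times> 'a) set \<Rightarrow> 'a set \<Rightarrow> ('a \<times> 'a) set" where
  "del_vertices_E V E A = E \<inter> ((V - A) \<times> (V - A))"

text \<open>Perfect fractional matching: a nonnegative weighting of the edges (values off E are
  irrelevant, we require them to be 0) with all out-sums and in-sums equal to 1.\<close>
definition perfect_frac_matching :: "'a set \<Rightarrow> ('a \<times> 'a) set \<Rightarrow> ('a \<times> 'a \<Rightarrow> real) \<Rightarrow> bool" where
  "perfect_frac_matching V E x \<longleftrightarrow>
     (\<forall>e\<in>E. x e \<ge> 0) \<and> (\<forall>e. e \<notin> E \<longrightarrow> x e = 0) \<and>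
     (\<forall>v\<in>V. (\<Sum>w\<in>out_nbrs E v. x (v, w)) = 1 \<and> (\<Sum>w\<in>in_nbrs E v. x (w, v)) = 1)"

definition b_normal :: "real \<Rightarrow> 'a set \<Rightarrow> ('a \<times> 'a) set \<Rightarrow> ('a \<times> 'a \<Rightarrow> real) \<Rightarrow> bool" where
  "b_normal b V E x \<longleftrightarrow>
     (\<forall>e\<in>E. 1 / (b * real (card V)) \<le> x e \<and> x e \<le> b / real (card V))"

definition entropy :: "('a \<times> 'a) set \<Rightarrow> ('a \<times> 'a \<Rightarrow> real) \<Rightarrow> real" where
  "entropy E x = (\<Sum>e\<in>E. if x e = 0 then 0 else x e * log 2 (1 / x e))"

text \<open>h(G): the maximum of h over perfect fractional matchings (taken as a supremum).\<close>
definition h_digraph :: "'a set \<Rightarrow> ('a \<times> 'a) set \<Rightarrow> real" where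
  "h_digraph V E = Sup (entropy E ` {x. perfect_frac_matching V E x})"

end

theory Submission
  imports Defs
begin

lemma compact_box:
  "compact (PiE UNIV (\<lambda>v::nat. if v \<in> W then {0..1::real} else {0}))"
proof -
  have "compactin (product_topology (\<lambda>i. euclidean) UNIV) (PiE UNIV (\<lambda>v::nat. if v \<in> W then {0..1::real} else {0}))"
    unfolding compactin_PiE by (auto simp: compactin_euclidean_iff)
  then show ?thesis by (simp add: euclidean_product_topology compactin_euclidean_iff)
qed

lemma compact_K:
  fixes W :: "nat set" and R :: real
  shows "compact {\<rho>::nat\<Rightarrow>real. (\<forall>v. v\<notin>W \<longrightarrow> \<rho> v = 0) \<and> (\<forall>v\<in>W. 0 \<le> \<rho> v \<and> \<rho> v \<le> 1)
     \<and> sum \<rho> W = 1 \<and> (\<forall>v\<in>W. \<forall>v'\<in>W. \<rho> v \<le> R * \<rho> v')}" (is "compact ?K")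
proof -
  let ?B = "PiE UNIV (\<lambda>v::nat. if v \<in> W then {0..1::real} else {0})"
  let ?C1 = "{\<rho>::nat\<Rightarrow>real. sum \<rho> W = 1}"
  let ?C2 = "\<Inter>p\<in>W\<times>W. {\<rho>::nat\<Rightarrow>real. \<rho> (fst p) \<le> R * \<rho> (snd p)}"
  have eq: "?K = ?B \<inter> (?C1 \<inter> ?C2)"
    by (auto simp: PiE_def Pi_def split: if_splits)
  have c1: "closed ?C1"
    by (intro closed_Collect_eq continuous_on_sum continuous_on_const)
       (auto intro: continuous_on_product_coordinates)
  have c2: "closed ?C2"
    by (intro closed_INT ballI closed_Collect_le continuous_on_mult continuous_on_const)
       (auto intro: continuous_on_product_coordinates)
  show ?thesis unfolding eq
    by (intro compact_Int_closed compact_box closed_Int c1 c2)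
qed

lemma ratio_sum:
  fixes f :: "nat \<Rightarrow> real" and \<delta> R :: real
  assumes fin: "finite W" and SW: "S \<subseteq> W" and pos: "\<forall>v\<in>W. 0 < f v"
    and rat: "\<forall>v\<in>W. \<forall>v'\<in>W. f v \<le> R * f v'" and dS: "\<delta> * real (card W) \<le> real (card S)"
    and d0: "0 < \<delta>" and R0: "0 \<le> R" and Wne: "W \<noteq> {}"
  shows "\<delta> * sum f W \<le> (\<delta> + R * (1 - \<delta>)) * sum f S"
proof -
  let ?m = "real (card W)"
  let ?Pc = "sum f (W - S)" and ?PS = "sum f S"
  have finS: "finite S" using fin SW finite_subset by blast
  have Pc0: "0 \<le> ?Pc" using pos by (intro sum_nonneg) auto
  have PS0: "0 \<le> ?PS" using pos SW by (intro sum_nonneg) (meson less_imp_le subsetD)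
  have "(\<Sum>s\<in>S. \<Sum>c\<in>W - S. f c) \<le> (\<Sum>s\<in>S. \<Sum>c\<in>W - S. R * f s)"
    using rat SW by (intro sum_mono) auto
  moreover have "(\<Sum>s\<in>S. \<Sum>c\<in>W - S. f c) = card S * ?Pc" by simp
  moreover have "(\<Sum>s\<in>S. \<Sum>c\<in>W - S. R * f s) = card (W - S) * (R * ?PS)"
    by (simp add: sum_distrib_left)
  ultimately have "card S * ?Pc \<le> card (W - S) * (R * ?PS)" by simp
  moreover have "card (W - S) = card W - card S" using finS SW by (simp add: card_Diff_subset)
  moreover have "card S \<le> card W" using fin SW card_mono by blast
  ultimately have A: "real (card S) * ?Pc \<le> (?m - card S) * (R * ?PS)"
    by (simp add: of_nat_diff)
  have "\<delta> * ?m * ?Pc \<le> real (card S) * ?Pc" using dS Pc0 by (intro mult_right_mono) auto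
  also have "\<dots> \<le> (?m - card S) * (R * ?PS)" by (rule A)
  also have "\<dots> \<le> (?m - \<delta> * ?m) * (R * ?PS)" using dS R0 PS0 by (intro mult_right_mono) auto
  finally have B: "?m * (\<delta> * ?Pc) \<le> ?m * ((1 - \<delta>) * R * ?PS)" by (simp add: algebra_simps)
  have m0: "0 < ?m" using fin Wne by (simp add: card_gt_0_iff)
  have C: "\<delta> * ?Pc \<le> (1 - \<delta>) * R * ?PS" using B m0 by simp
  have "sum f W = ?PS + ?Pc" using fin SW by (metis add.commute sum.subset_diff)
  then show ?thesis using C by (simp add: algebra_simps)
qed

lemma inv_ratio:
  fixes f :: "nat \<Rightarrow> real" and \<delta> R :: real
  assumes fin: "finite W" and Wne: "W \<noteq> {}" and pos: "\<forall>v\<in>W. 0 < f v"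
    and rat: "\<forall>v\<in>W. \<forall>v'\<in>W. f v \<le> R * f v'" and R0: "0 \<le> R" and d0: "0 < \<delta>"
    and SW: "S \<subseteq> W" and S'W: "S' \<subseteq> W" and S'ne: "S' \<noteq> {}"
    and dS: "\<delta> * real (card W) \<le> real (card S)"
  shows "1 / sum f S \<le> (1 + (1 - \<delta>) / \<delta> * R) * (1 / sum f S')"
proof -
  have finS: "finite S" "finite S'" using fin SW S'W finite_subset by auto
  have "0 < \<delta> * real (card W)" using d0 fin Wne by (simp add: card_gt_0_iff)
  hence "S \<noteq> {}" using dS by auto
  hence PS: "0 < sum f S" using finS pos SW by (intro sum_pos) auto
  have PS': "0 < sum f S'" using finS pos S'W S'ne by (intro sum_pos) auto
  have "sum f S' \<le> sum f W" using fin S'W pos by (intro sum_mono2) auto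
  also have "\<delta> * sum f W \<le> (\<delta> + R * (1 - \<delta>)) * sum f S"
    by (rule ratio_sum[OF fin SW pos rat dS d0 R0 Wne])
  hence "sum f W \<le> (1 + (1 - \<delta>) / \<delta> * R) * sum f S"
    using d0 by (simp add: field_simps)
  finally have "sum f S' \<le> (1 + (1 - \<delta>) / \<delta> * R) * sum f S" .
  then show ?thesis using PS PS' by (simp add: field_simps)
qed

definition outW :: "nat set \<Rightarrow> (nat \<times> nat) set \<Rightarrow> nat \<Rightarrow> nat set" where
  "outW W F v = {w\<in>W. (v, w) \<in> F}"
definition inW :: "nat set \<Rightarrow> (nat \<times> nat) set \<Rightarrow> nat \<Rightarrow> nat set" where
  "inW W F w = {v\<in>W. (v, w) \<in> F}"
definition Psi :: "nat set \<Rightarrow> (nat \<times> nat) set \<Rightarrow> (nat \<Rightarrow> real) \<Rightarrow> real" where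
  "Psi W F \<rho> = (\<Sum>w\<in>W. ln (\<Sum>v\<in>inW W F w. \<rho> v)) - (\<Sum>v\<in>W. ln (\<rho> v))"

lemma swap_W:
  fixes f g :: "nat \<Rightarrow> real"
  assumes "finite W"
  shows "(\<Sum>w\<in>W. g w * (\<Sum>v\<in>inW W F w. f v)) = (\<Sum>v\<in>W. f v * (\<Sum>w\<in>outW W F v. g w))"
proof -
  have "(\<Sum>v\<in>W. f v * (\<Sum>w\<in>outW W F v. g w)) = (\<Sum>v\<in>W. \<Sum>w\<in>{w\<in>W. (v,w)\<in>F}. f v * g w)"
    by (simp add: outW_def sum_distrib_left)
  also have "\<dots> = (\<Sum>w\<in>W. \<Sum>v | v\<in>W \<and> (v,w)\<in>F. f v * g w)"
    by (rule sum.swap_restrict[OF assms assms])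
  also have "\<dots> = (\<Sum>w\<in>W. g w * (\<Sum>v\<in>inW W F w. f v))"
    by (simp add: inW_def sum_distrib_left mult.commute)
  finally show ?thesis by simp
qed

lemma scaling:
  fixes W :: "nat set" and F :: "(nat \<times> nat) set" and \<delta> :: real
  assumes fin: "finite W" and Wne: "W \<noteq> {}" and d1: "1/2 < \<delta>" and d2: "\<delta> \<le> 1"
    and dout: "\<forall>v\<in>W. \<delta> * real (card W) \<le> real (card (outW W F v))"
    and din: "\<forall>w\<in>W. \<delta> * real (card W) \<le> real (card (inW W F w))"
  shows "\<exists>\<rho> \<sigma>. (\<forall>v\<in>W. 0 < \<rho> v) \<and> (\<forall>w\<in>W. 0 < \<sigma> w)
    \<and> (\<forall>v\<in>W. \<forall>v'\<in>W. \<rho> v \<le> \<delta>/(2*\<delta>-1) * \<rho> v')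
    \<and> (\<forall>w\<in>W. \<forall>w'\<in>W. \<sigma> w \<le> \<delta>/(2*\<delta>-1) * \<sigma> w')
    \<and> (\<forall>v\<in>W. (\<Sum>w\<in>outW W F v. \<rho> v * \<sigma> w) = 1)
    \<and> (\<forall>w\<in>W. (\<Sum>v\<in>inW W F w. \<rho> v * \<sigma> w) = 1)"
proof -
  define R where "R = \<delta>/(2*\<delta>-1)"
  have R1: "1 \<le> R" using d1 d2 by (simp add: R_def field_simps)
  have qR: "1 + (1 - \<delta>) / \<delta> * R = R" using d1 by (simp add: R_def field_simps)
  have d0: "0 < \<delta>" using d1 by simp
  have m0: "0 < real (card W)" using fin Wne by (simp add: card_gt_0_iff)
  have inW_sub: "inW W F w \<subseteq> W" for w by (auto simp: inW_def)
  have outW_sub: "outW W F v \<subseteq> W" for v by (auto simp: outW_def)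
  have inW_ne: "inW W F w \<noteq> {}" if "w \<in> W" for w
    using din that d0 m0 by (metis card.empty mult_pos_pos not_le of_nat_0)
  have outW_ne: "outW W F v \<noteq> {}" if "v \<in> W" for v
    using dout that d0 m0 by (metis card.empty mult_pos_pos not_le of_nat_0)
  have fin_in: "finite (inW W F w)" for w using fin inW_sub finite_subset by blast
  have fin_out: "finite (outW W F v)" for v using fin outW_sub finite_subset by blast
  define K where "K = {\<rho>::nat\<Rightarrow>real. (\<forall>v. v\<notin>W \<longrightarrow> \<rho> v = 0) \<and> (\<forall>v\<in>W. 0 \<le> \<rho> v \<and> \<rho> v \<le> 1)
     \<and> sum \<rho> W = 1 \<and> (\<forall>v\<in>W. \<forall>v'\<in>W. \<rho> v \<le> R * \<rho> v')}"
  have Kc: "compact K" unfolding K_def by (rule compact_K)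
  have Kpos: "0 < \<rho> v" if "\<rho> \<in> K" "v \<in> W" for \<rho> v
  proof -
    have "\<exists>v'\<in>W. 0 < \<rho> v'"
    proof (rule ccontr)
      assume "\<not> ?thesis"
      hence "sum \<rho> W \<le> 0" by (intro sum_nonpos) auto
      thus False using that(1) by (simp add: K_def)
    qed
    then obtain v' where "v' \<in> W" "0 < \<rho> v'" by blast
    moreover have "\<rho> v' \<le> R * \<rho> v" using that \<open>v' \<in> W\<close> by (simp add: K_def)
    ultimately have "0 < R * \<rho> v" by linarith
    thus ?thesis using R1 by (simp add: zero_less_mult_iff)
  qed
  have Sinpos: "0 < (\<Sum>v\<in>inW W F w. \<rho> v)" if "\<rho> \<in> K" "w \<in> W" for \<rho> w
    using Kpos[OF that(1)] inW_ne[OF that(2)] fin_in inW_sub by (intro sum_pos) auto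
  have cont: "continuous_on K (Psi W F)"
    unfolding Psi_def
    by (intro continuous_on_diff continuous_on_sum continuous_on_ln)
       (auto intro: continuous_on_subset[OF continuous_on_product_coordinates]
             dest: Sinpos Kpos simp del: continuous_on_product_coordinates)
  have Kne: "(\<lambda>v. if v \<in> W then 1 / real (card W) else 0) \<in> K"
    using R1 m0 by (auto simp: K_def divide_right_mono)
  obtain \<rho> where \<rho>K: "\<rho> \<in> K" and min: "\<forall>y\<in>K. Psi W F \<rho> \<le> Psi W F y"
    using continuous_attains_inf[OF Kc _ cont] Kne by blast
  define \<sigma> where "\<sigma> w = 1 / (\<Sum>v\<in>inW W F w. \<rho> v)" for w
  define T where "T v = (\<Sum>w\<in>outW W F v. \<sigma> w)" for v
  define \<rho>s where "\<rho>s v = 1 / T v" for v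
  have \<rho>pos: "\<forall>v\<in>W. 0 < \<rho> v" using Kpos[OF \<rho>K] by blast
  have \<rho>rat: "\<forall>v\<in>W. \<forall>v'\<in>W. \<rho> v \<le> R * \<rho> v'" using \<rho>K by (simp add: K_def)
  have \<sigma>pos: "\<forall>w\<in>W. 0 < \<sigma> w" using Sinpos[OF \<rho>K] by (simp add: \<sigma>_def)
  have \<sigma>rat: "\<forall>w\<in>W. \<forall>w'\<in>W. \<sigma> w \<le> R * \<sigma> w'"
  proof (intro ballI)
    fix w w' assume "w \<in> W" "w' \<in> W"
    have "\<sigma> w \<le> (1 + (1 - \<delta>) / \<delta> * R) * \<sigma> w'"
      unfolding \<sigma>_def
      using \<open>w \<in> W\<close> \<open>w' \<in> W\<close> R1
      by (intro inv_ratio[OF fin Wne \<rho>pos \<rho>rat _ d0 inW_sub inW_sub inW_ne]) (auto simp: din)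
    thus "\<sigma> w \<le> R * \<sigma> w'" using qR by simp
  qed
  have Tpos: "0 < T v" if "v \<in> W" for v
    using \<sigma>pos outW_ne[OF that] fin_out outW_sub unfolding T_def by (intro sum_pos) auto
  have \<rho>spos: "\<forall>v\<in>W. 0 < \<rho>s v" using Tpos by (simp add: \<rho>s_def)
  have \<rho>srat: "\<forall>v\<in>W. \<forall>v'\<in>W. \<rho>s v \<le> R * \<rho>s v'"
  proof (intro ballI)
    fix v v' assume "v \<in> W" "v' \<in> W"
    have "\<rho>s v \<le> (1 + (1 - \<delta>) / \<delta> * R) * \<rho>s v'"
      unfolding \<rho>s_def T_def
      using \<open>v \<in> W\<close> \<open>v' \<in> W\<close> R1
      by (intro inv_ratio[OF fin Wne \<sigma>pos \<sigma>rat _ d0 outW_sub outW_sub outW_ne]) (auto simp: dout)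
    thus "\<rho>s v \<le> R * \<rho>s v'" using qR by simp
  qed
  define t where "t = sum \<rho>s W"
  have t0: "0 < t" unfolding t_def using \<rho>spos fin Wne by (intro sum_pos) auto
  define \<rho>' where "\<rho>' v = (if v \<in> W then \<rho>s v / t else 0)" for v
  have sum\<rho>': "sum \<rho>' W = 1"
    using t0 by (simp add: \<rho>'_def t_def sum_divide_distrib[symmetric])
  have \<rho>'K: "\<rho>' \<in> K"
  proof -
    have nn: "\<forall>v\<in>W. 0 \<le> \<rho>' v" using \<rho>spos t0 by (simp add: \<rho>'_def less_imp_le)
    have "\<rho>' v \<le> 1" if "v \<in> W" for v
      using member_le_sum[of v W \<rho>'] nn fin that sum\<rho>' by simp
    moreover have "\<rho>' v \<le> R * \<rho>' v'" if "v \<in> W" "v' \<in> W" for v v'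
    proof -
      have "\<rho>s v / t \<le> (R * \<rho>s v') / t" using \<rho>srat that t0 by (intro divide_right_mono) auto
      thus ?thesis using that by (simp add: \<rho>'_def)
    qed
    ultimately show ?thesis using nn sum\<rho>' by (auto simp: K_def \<rho>'_def)
  qed
  have Psi_eq: "Psi W F \<rho>' = Psi W F \<rho>s"
  proof -
    have "(\<Sum>v\<in>inW W F w. \<rho>' v) = (\<Sum>v\<in>inW W F w. \<rho>s v) / t" for w
      using inW_sub by (simp add: sum_divide_distrib \<rho>'_def subset_iff)
    hence "Psi W F \<rho>' = (\<Sum>w\<in>W. ln ((\<Sum>v\<in>inW W F w. \<rho>s v) / t)) - (\<Sum>v\<in>W. ln (\<rho>s v / t))"
      by (simp add: Psi_def \<rho>'_def)
    also have "\<dots> = (\<Sum>w\<in>W. ln (\<Sum>v\<in>inW W F w. \<rho>s v) - ln t) - (\<Sum>v\<in>W. ln (\<rho>s v) - ln t)"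
    proof -
      have "(\<Sum>w\<in>W. ln ((\<Sum>v\<in>inW W F w. \<rho>s v) / t)) = (\<Sum>w\<in>W. ln (\<Sum>v\<in>inW W F w. \<rho>s v) - ln t)"
      proof (intro sum.cong refl)
        fix w assume "w \<in> W"
        have "0 < (\<Sum>v\<in>inW W F w. \<rho>s v)"
          using \<rho>spos inW_ne[OF \<open>w \<in> W\<close>] fin_in inW_sub by (intro sum_pos) auto
        thus "ln ((\<Sum>v\<in>inW W F w. \<rho>s v) / t) = ln (\<Sum>v\<in>inW W F w. \<rho>s v) - ln t"
          using t0 by (simp add: ln_div)
      qed
      moreover have "(\<Sum>v\<in>W. ln (\<rho>s v / t)) = (\<Sum>v\<in>W. ln (\<rho>s v) - ln t)"
        using \<rho>spos t0 by (intro sum.cong refl) (simp add: ln_div less_imp_neq[symmetric])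
      ultimately show ?thesis by simp
    qed
    also have "\<dots> = Psi W F \<rho>s" by (simp add: Psi_def sum_subtractf)
    finally show ?thesis .
  qed
  have min': "Psi W F \<rho> \<le> Psi W F \<rho>s" using min \<rho>'K Psi_eq by auto
  have Sin\<rho>pos: "\<forall>w\<in>W. 0 < (\<Sum>v\<in>inW W F w. \<rho> v)" using Sinpos[OF \<rho>K] by blast
  have Sin\<rho>spos: "\<forall>w\<in>W. 0 < (\<Sum>v\<in>inW W F w. \<rho>s v)"
    using \<rho>spos inW_ne fin_in inW_sub by (intro ballI sum_pos) (auto simp: subset_iff)
  have col: "\<forall>w\<in>W. \<sigma> w * (\<Sum>v\<in>inW W F w. \<rho> v) = 1" using Sin\<rho>pos by (simp add: \<sigma>_def less_imp_neq[symmetric])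
  have rows: "\<forall>v\<in>W. \<rho>s v * T v = 1" using Tpos by (simp add: \<rho>s_def) (metis order_less_irrefl)
  have sw1: "(\<Sum>v\<in>W. \<rho> v * T v) = real (card W)"
    using swap_W[OF fin, where g=\<sigma> and F=F and f=\<rho>] col by (simp add: T_def)
  have sw2: "(\<Sum>w\<in>W. \<sigma> w * (\<Sum>v\<in>inW W F w. \<rho>s v)) = real (card W)"
    using swap_W[OF fin, where g=\<sigma> and F=F and f=\<rho>s] rows by (simp add: T_def)
  have I1: "(\<Sum>w\<in>W. ln (\<Sum>v\<in>inW W F w. \<rho>s v)) - (\<Sum>w\<in>W. ln (\<Sum>v\<in>inW W F w. \<rho> v)) \<le> 0"
  proof -
    have "(\<Sum>w\<in>W. ln (\<Sum>v\<in>inW W F w. \<rho>s v)) - (\<Sum>w\<in>W. ln (\<Sum>v\<in>inW W F w. \<rho> v))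
        = (\<Sum>w\<in>W. ln (\<sigma> w * (\<Sum>v\<in>inW W F w. \<rho>s v)))"
      unfolding sum_subtractf[symmetric]
    proof (intro sum.cong refl)
      fix w assume w: "w \<in> W"
      have a: "0 < (\<Sum>v\<in>inW W F w. \<rho> v)" "0 < (\<Sum>v\<in>inW W F w. \<rho>s v)"
        using Sin\<rho>pos Sin\<rho>spos w by auto
      show "ln (\<Sum>v\<in>inW W F w. \<rho>s v) - ln (\<Sum>v\<in>inW W F w. \<rho> v) = ln (\<sigma> w * (\<Sum>v\<in>inW W F w. \<rho>s v))"
        using a by (simp add: \<sigma>_def ln_div ln_mult)
    qed
    also have "\<dots> \<le> (\<Sum>w\<in>W. \<sigma> w * (\<Sum>v\<in>inW W F w. \<rho>s v) - 1)"
      using Sin\<rho>spos \<sigma>pos by (intro sum_mono ln_le_minus_one) auto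
    also have "\<dots> = 0" using sw2 by (simp add: sum_subtractf)
    finally show ?thesis .
  qed
  have Psis: "Psi W F \<rho>s = (\<Sum>w\<in>W. ln (\<Sum>v\<in>inW W F w. \<rho>s v)) + (\<Sum>v\<in>W. ln (T v))"
  proof -
    have "(\<Sum>v\<in>W. ln (\<rho>s v)) = - (\<Sum>v\<in>W. ln (T v))"
      unfolding sum_negf[symmetric] using Tpos by (intro sum.cong refl) (simp add: \<rho>s_def ln_div)
    thus ?thesis by (simp add: Psi_def)
  qed
  have L: "0 \<le> (\<Sum>v\<in>W. ln (\<rho> v * T v))"
  proof -
    have "(\<Sum>v\<in>W. ln (\<rho> v * T v)) = (\<Sum>v\<in>W. ln (\<rho> v)) + (\<Sum>v\<in>W. ln (T v))"
          unfolding sum.distrib[symmetric]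
    proof (intro sum.cong refl)
      fix v assume v: "v \<in> W"
      show "ln (\<rho> v * T v) = ln (\<rho> v) + ln (T v)" proof -
        have "\<rho> v \<noteq> 0" "T v \<noteq> 0" using \<rho>pos Tpos[OF v] v by (metis order_less_irrefl)+
        thus ?thesis by (simp add: ln_mult)
      qed
    qed
    thus ?thesis using min' Psis I1 by (simp add: Psi_def)
  qed
  define g where "g v = \<rho> v * T v - 1 - ln (\<rho> v * T v)" for v
  have g0: "\<forall>v\<in>W. 0 \<le> g v"
    using \<rho>pos Tpos ln_le_minus_one by (simp add: g_def)
  have "sum g W = (\<Sum>v\<in>W. \<rho> v * T v) - real (card W) - (\<Sum>v\<in>W. ln (\<rho> v * T v))"
    by (simp add: g_def sum_subtractf)
  hence "sum g W \<le> 0" using sw1 L by simp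
  moreover have "0 \<le> sum g W" using g0 by (intro sum_nonneg) auto
  ultimately have "sum g W = 0" by linarith
  hence gz: "\<forall>v\<in>W. g v = 0" using sum_nonneg_eq_0_iff[OF fin] g0 by blast
  have row: "\<forall>v\<in>W. \<rho> v * T v = 1"
  proof
    fix v assume "v \<in> W"
    hence "ln (\<rho> v * T v) = \<rho> v * T v - 1" using gz by (simp add: g_def)
    thus "\<rho> v * T v = 1" using ln_eq_minus_one \<rho>pos Tpos \<open>v \<in> W\<close> by (meson mult_pos_pos)
  qed
  show ?thesis
  proof (intro exI conjI)
    show "\<forall>v\<in>W. 0 < \<rho> v" by (rule \<rho>pos)
    show "\<forall>w\<in>W. 0 < \<sigma> w" by (rule \<sigma>pos)
    show "\<forall>v\<in>W. \<forall>v'\<in>W. \<rho> v \<le> \<delta> / (2 * \<delta> - 1) * \<rho> v'" using \<rho>rat by (simp add: R_def)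
    show "\<forall>w\<in>W. \<forall>w'\<in>W. \<sigma> w \<le> \<delta> / (2 * \<delta> - 1) * \<sigma> w'" using \<sigma>rat by (simp add: R_def)
    show "\<forall>v\<in>W. (\<Sum>w\<in>outW W F v. \<rho> v * \<sigma> w) = 1" using row by (simp add: T_def sum_distrib_left)
    show "\<forall>w\<in>W. (\<Sum>v\<in>inW W F w. \<rho> v * \<sigma> w) = 1" using col
      by (simp add: sum_distrib_right[symmetric] mult.commute)
  qed
qed

lemma sum_rows:
  assumes fin: "finite V" and EV: "E \<subseteq> V \<times> V"
  shows "(\<Sum>e\<in>E. f e) = (\<Sum>v\<in>V. \<Sum>w\<in>out_nbrs E v. f (v, w))"
proof -
  have eq: "E = Sigma V (out_nbrs E)" using EV by (auto simp: out_nbrs_def)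
  have fo: "\<forall>v\<in>V. finite (out_nbrs E v)"
    using EV fin by (auto simp: out_nbrs_def intro: finite_subset[of _ V])
  have "(\<Sum>v\<in>V. \<Sum>w\<in>out_nbrs E v. f (v, w)) = (\<Sum>(v,w)\<in>Sigma V (out_nbrs E). f (v, w))"
    by (rule sum.Sigma[OF fin fo])
  also have "\<dots> = (\<Sum>e\<in>E. f e)" using eq by (simp add: case_prod_eta)
  finally show ?thesis by simp
qed

lemma out_nbrs_eq: "E \<subseteq> V \<times> V \<Longrightarrow> out_nbrs E v = {w\<in>V. (v, w) \<in> E}"
  by (auto simp: out_nbrs_def)
lemma in_nbrs_eq: "E \<subseteq> V \<times> V \<Longrightarrow> in_nbrs E w = {v. v \<in> V \<and> (v, w) \<in> E}"
  by (auto simp: in_nbrs_def)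

lemma sum_cols:
  assumes fin: "finite V" and EV: "E \<subseteq> V \<times> V"
  shows "(\<Sum>e\<in>E. f e) = (\<Sum>w\<in>V. \<Sum>v\<in>in_nbrs E w. f (v, w))"
proof -
  have "(\<Sum>e\<in>E. f e) = (\<Sum>v\<in>V. \<Sum>w\<in>{w\<in>V. (v, w) \<in> E}. f (v, w))"
    using sum_rows[OF fin EV] out_nbrs_eq[OF EV] by simp
  also have "\<dots> = (\<Sum>w\<in>V. \<Sum>v | v \<in> V \<and> (v, w) \<in> E. f (v, w))"
    by (rule sum.swap_restrict[OF fin fin])
  also have "\<dots> = (\<Sum>w\<in>V. \<Sum>v\<in>in_nbrs E w. f (v, w))"
    using in_nbrs_eq[OF EV] by simp
  finally show ?thesis .
qed

lemma gibbs_pt: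
  fixes x q :: real
  assumes "0 \<le> x" "0 < q"
  shows "(if x = 0 then 0 else x * log 2 (1 / x)) \<le> x * (- log 2 q) + (q - x) / ln 2"
proof (cases "x = 0")
  case True thus ?thesis using assms by simp
next
  case False
  hence x0: "0 < x" using assms by simp
  have "ln (q / x) \<le> q / x - 1" using x0 assms by (intro ln_le_minus_one) simp
  hence "x * ln (q / x) \<le> x * (q / x - 1)" using x0 by (intro mult_left_mono) auto
  also have "\<dots> = q - x" using x0 by (simp add: field_simps)
  finally have A: "x * ln (q / x) \<le> q - x" .
  have "x * log 2 (1 / x) - x * (- log 2 q) = x * ln (q / x) / ln 2"
    using x0 assms by (simp add: log_def ln_div field_simps)
  also have "\<dots> \<le> (q - x) / ln 2" using A by (intro divide_right_mono) auto
  finally show ?thesis using False by simp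
qed

lemma gibbs:
  fixes r s :: "nat \<Rightarrow> real"
  assumes fin: "finite V" and EV: "E \<subseteq> V \<times> V" and pm: "perfect_frac_matching V E x"
    and pos: "\<forall>v\<in>V. 0 < r v \<and> 0 < s v"
  shows "entropy E x \<le> - (\<Sum>v\<in>V. log 2 (r v)) - (\<Sum>v\<in>V. log 2 (s v))
           + ((\<Sum>e\<in>E. r (fst e) * s (snd e)) - real (card V)) / ln 2"
proof -
  have xnn: "\<forall>e\<in>E. 0 \<le> x e" using pm by (simp add: perfect_frac_matching_def)
  have rowx: "\<forall>v\<in>V. (\<Sum>w\<in>out_nbrs E v. x (v, w)) = 1" using pm by (simp add: perfect_frac_matching_def)
  have colx: "\<forall>v\<in>V. (\<Sum>w\<in>in_nbrs E v. x (w, v)) = 1" using pm by (simp add: perfect_frac_matching_def)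
  have qpos: "\<forall>e\<in>E. 0 < r (fst e) * s (snd e)" using pos EV by (auto intro!: mult_pos_pos)
  have "entropy E x \<le> (\<Sum>e\<in>E. x e * (- log 2 (r (fst e))) + x e * (- log 2 (s (snd e)))
                          + (r (fst e) * s (snd e) - x e) / ln 2)"
    unfolding entropy_def
  proof (intro sum_mono)
    fix e assume e: "e \<in> E"
    have "log 2 (r (fst e) * s (snd e)) = log 2 (r (fst e)) + log 2 (s (snd e))"
      using pos EV e by (intro log_mult_pos) auto
    thus "(if x e = 0 then 0 else x e * log 2 (1 / x e)) \<le> x e * (- log 2 (r (fst e))) + x e * (- log 2 (s (snd e)))
                          + (r (fst e) * s (snd e) - x e) / ln 2"
      using gibbs_pt[of "x e" "r (fst e) * s (snd e)"] xnn qpos e by (simp add: algebra_simps)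
  qed
  also have "\<dots> = - (\<Sum>e\<in>E. x e * log 2 (r (fst e))) - (\<Sum>e\<in>E. x e * log 2 (s (snd e)))
                 + ((\<Sum>e\<in>E. r (fst e) * s (snd e)) - (\<Sum>e\<in>E. x e)) / ln 2"
    by (simp add: sum.distrib sum_subtractf sum_divide_distrib[symmetric] sum_negf)
  also have "(\<Sum>e\<in>E. x e * log 2 (r (fst e))) = (\<Sum>v\<in>V. log 2 (r v))"
  proof -
    have "(\<Sum>e\<in>E. x e * log 2 (r (fst e))) = (\<Sum>v\<in>V. \<Sum>w\<in>out_nbrs E v. x (v, w) * log 2 (r v))"
      by (simp add: sum_rows[OF fin EV])
    also have "\<dots> = (\<Sum>v\<in>V. log 2 (r v))"
      using rowx by (simp add: sum_distrib_right[symmetric])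
    finally show ?thesis .
  qed
  also have "(\<Sum>e\<in>E. x e * log 2 (s (snd e))) = (\<Sum>v\<in>V. log 2 (s v))"
  proof -
    have "(\<Sum>e\<in>E. x e * log 2 (s (snd e))) = (\<Sum>w\<in>V. \<Sum>v\<in>in_nbrs E w. x (v, w) * log 2 (s w))"
      by (simp add: sum_cols[OF fin EV])
    also have "\<dots> = (\<Sum>v\<in>V. log 2 (s v))"
      using colx by (simp add: sum_distrib_right[symmetric])
    finally show ?thesis .
  qed
  also have "(\<Sum>e\<in>E. x e) = real (card V)"
    using rowx by (simp add: sum_rows[OF fin EV])
  finally show ?thesis .
qed

lemma scaling_pfm:
  fixes W :: "nat set" and F :: "(nat \<times> nat) set" and \<delta> :: real
  assumes fin: "finite W" and Wne: "W \<noteq> {}" and FW: "F \<subseteq> W \<times> W" and d1: "1/2 < \<delta>" and d2: "\<delta> \<le> 1"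
    and dout: "\<forall>v\<in>W. \<delta> * real (card W) \<le> real (card (outW W F v))"
    and din: "\<forall>w\<in>W. \<delta> * real (card W) \<le> real (card (inW W F w))"
  shows "\<exists>\<rho> \<sigma>. (\<forall>v\<in>W. 0 < \<rho> v) \<and> (\<forall>w\<in>W. 0 < \<sigma> w)
    \<and> perfect_frac_matching W F (\<lambda>e. if e \<in> F then \<rho> (fst e) * \<sigma> (snd e) else 0)
    \<and> entropy F (\<lambda>e. if e \<in> F then \<rho> (fst e) * \<sigma> (snd e) else 0)
        = - (\<Sum>v\<in>W. log 2 (\<rho> v)) - (\<Sum>v\<in>W. log 2 (\<sigma> v))
    \<and> (\<Sum>e\<in>F. \<rho> (fst e) * \<sigma> (snd e)) = real (card W)
    \<and> (\<forall>e\<in>F. 1 / (\<delta>/(2*\<delta>-1) * real (card W)) \<le> \<rho> (fst e) * \<sigma> (snd e)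
              \<and> \<rho> (fst e) * \<sigma> (snd e) \<le> \<delta>/(2*\<delta>-1) / (\<delta> * real (card W)))
    \<and> (\<forall>v\<in>W. \<forall>w\<in>W. 1 / ((\<delta>/(2*\<delta>-1))^2 * real (card W)) \<le> \<rho> v * \<sigma> w
              \<and> \<rho> v * \<sigma> w \<le> (\<delta>/(2*\<delta>-1))^2 / (\<delta> * real (card W)))"
proof -
  define R where "R = \<delta>/(2*\<delta>-1)"
  have R1: "1 \<le> R" using d1 d2 by (simp add: R_def field_simps)
  have d0: "0 < \<delta>" using d1 by simp
  have m0: "0 < real (card W)" using fin Wne by (simp add: card_gt_0_iff)
  obtain \<rho> \<sigma> where \<rho>pos: "\<forall>v\<in>W. 0 < \<rho> v" and \<sigma>pos: "\<forall>w\<in>W. 0 < \<sigma> w"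
    and \<rho>rat: "\<forall>v\<in>W. \<forall>v'\<in>W. \<rho> v \<le> R * \<rho> v'"
    and \<sigma>rat: "\<forall>w\<in>W. \<forall>w'\<in>W. \<sigma> w \<le> R * \<sigma> w'"
    and row: "\<forall>v\<in>W. (\<Sum>w\<in>outW W F v. \<rho> v * \<sigma> w) = 1"
    and col: "\<forall>w\<in>W. (\<Sum>v\<in>inW W F w. \<rho> v * \<sigma> w) = 1"
    using scaling[OF fin Wne d1 d2 dout din] unfolding R_def by blast
  define z where "z e = (if e \<in> F then \<rho> (fst e) * \<sigma> (snd e) else 0)" for e
  have outeq: "out_nbrs F v = outW W F v" for v using FW by (auto simp: out_nbrs_def outW_def)
  have ineq: "in_nbrs F w = inW W F w" for w using FW by (auto simp: in_nbrs_def inW_def)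
  have outW_sub: "outW W F v \<subseteq> W" for v by (auto simp: outW_def)
  have fin_out: "finite (outW W F v)" for v using fin outW_sub finite_subset by blast
  have outW_ne: "outW W F v \<noteq> {}" if "v \<in> W" for v
    using dout that d0 m0 by (metis card.empty mult_pos_pos not_le of_nat_0)
  have pm: "perfect_frac_matching W F z"
    unfolding perfect_frac_matching_def
  proof (intro conjI ballI allI impI)
    fix e assume "e \<in> F" thus "0 \<le> z e" using FW \<rho>pos \<sigma>pos by (auto simp: z_def intro!: mult_nonneg_nonneg less_imp_le)
  next
    fix e assume "e \<notin> F" thus "z e = 0" by (simp add: z_def)
  next
    fix v assume "v \<in> W"
    show "(\<Sum>w\<in>out_nbrs F v. z (v, w)) = 1" using row \<open>v \<in> W\<close>
      by (simp add: outeq z_def outW_def)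
    show "(\<Sum>w\<in>in_nbrs F v. z (w, v)) = 1" using col \<open>v \<in> W\<close>
      by (simp add: ineq z_def inW_def)
  qed
  have ent: "entropy F z = - (\<Sum>v\<in>W. log 2 (\<rho> v)) - (\<Sum>v\<in>W. log 2 (\<sigma> v))"
  proof -
    have "entropy F z = (\<Sum>e\<in>F. - (\<rho> (fst e) * \<sigma> (snd e) * log 2 (\<rho> (fst e)))
                                 - \<rho> (fst e) * \<sigma> (snd e) * log 2 (\<sigma> (snd e)))"
      unfolding entropy_def
    proof (intro sum.cong refl)
      fix e assume e: "e \<in> F"
      have p: "0 < \<rho> (fst e)" "0 < \<sigma> (snd e)" using e FW \<rho>pos \<sigma>pos by auto
      hence "z e \<noteq> 0" using e by (simp add: z_def)
      moreover have L: "log 2 (1 / (\<rho> (fst e) * \<sigma> (snd e))) = - log 2 (\<rho> (fst e)) - log 2 (\<sigma> (snd e))"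
        using p by (simp add: log_divide_pos log_mult_pos)
      have "z e * log 2 (1 / z e) = \<rho> (fst e) * \<sigma> (snd e) * (- log 2 (\<rho> (fst e)) - log 2 (\<sigma> (snd e)))"
        using e by (simp only: z_def if_True L)
      ultimately show "(if z e = 0 then 0 else z e * log 2 (1 / z e)) = - (\<rho> (fst e) * \<sigma> (snd e) * log 2 (\<rho> (fst e)))
                                 - \<rho> (fst e) * \<sigma> (snd e) * log 2 (\<sigma> (snd e))"
        by (simp add: algebra_simps)
    qed
    also have "\<dots> = - (\<Sum>e\<in>F. \<rho> (fst e) * \<sigma> (snd e) * log 2 (\<rho> (fst e)))
                    - (\<Sum>e\<in>F. \<rho> (fst e) * \<sigma> (snd e) * log 2 (\<sigma> (snd e)))"
      by (simp add: sum_subtractf sum_negf)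
    also have "(\<Sum>e\<in>F. \<rho> (fst e) * \<sigma> (snd e) * log 2 (\<rho> (fst e))) = (\<Sum>v\<in>W. log 2 (\<rho> v))"
    proof -
      have "(\<Sum>e\<in>F. \<rho> (fst e) * \<sigma> (snd e) * log 2 (\<rho> (fst e)))
           = (\<Sum>v\<in>W. \<Sum>w\<in>outW W F v. \<rho> v * \<sigma> w * log 2 (\<rho> v))"
        by (simp add: sum_rows[OF fin FW] outeq)
      also have "\<dots> = (\<Sum>v\<in>W. log 2 (\<rho> v))"
        using row by (simp add: sum_distrib_right[symmetric])
      finally show ?thesis .
    qed
    also have "(\<Sum>e\<in>F. \<rho> (fst e) * \<sigma> (snd e) * log 2 (\<sigma> (snd e))) = (\<Sum>v\<in>W. log 2 (\<sigma> v))"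
    proof -
      have "(\<Sum>e\<in>F. \<rho> (fst e) * \<sigma> (snd e) * log 2 (\<sigma> (snd e)))
           = (\<Sum>w\<in>W. \<Sum>v\<in>inW W F w. \<rho> v * \<sigma> w * log 2 (\<sigma> w))"
        by (simp add: sum_cols[OF fin FW] ineq)
      also have "\<dots> = (\<Sum>v\<in>W. log 2 (\<sigma> v))"
        using col by (simp add: sum_distrib_right[symmetric])
      finally show ?thesis .
    qed
    finally show ?thesis .
  qed
  have tot: "(\<Sum>e\<in>F. \<rho> (fst e) * \<sigma> (snd e)) = real (card W)"
    using row by (simp add: sum_rows[OF fin FW] outeq)
  have ebound: "1 / (R * real (card W)) \<le> \<rho> v * \<sigma> w \<and> \<rho> v * \<sigma> w \<le> R / (\<delta> * real (card W))"
    if v: "v \<in> W" and w: "w \<in> outW W F v" for v w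
  proof
    have wW: "w \<in> W" using w outW_sub by auto
    have "(\<Sum>w'\<in>outW W F v. \<rho> v * \<sigma> w / R) \<le> (\<Sum>w'\<in>outW W F v. \<rho> v * \<sigma> w')"
    proof (intro sum_mono)
      fix w' assume "w' \<in> outW W F v"
      hence "\<sigma> w \<le> R * \<sigma> w'" using \<sigma>rat wW outW_sub by auto
      hence "\<rho> v * \<sigma> w \<le> \<rho> v * (R * \<sigma> w')" using \<rho>pos v by (intro mult_left_mono) auto
      thus "\<rho> v * \<sigma> w / R \<le> \<rho> v * \<sigma> w'" using R1 by (simp add: field_simps)
    qed
    hence "real (card (outW W F v)) * (\<rho> v * \<sigma> w / R) \<le> 1" using row v by simp
    moreover have "\<delta> * real (card W) * (\<rho> v * \<sigma> w / R) \<le> real (card (outW W F v)) * (\<rho> v * \<sigma> w / R)"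
      using dout v \<rho>pos \<sigma>pos wW R1 by (intro mult_right_mono) (auto intro!: divide_nonneg_pos mult_nonneg_nonneg less_imp_le)
    ultimately have "\<delta> * real (card W) * (\<rho> v * \<sigma> w / R) \<le> 1" by linarith
    thus "\<rho> v * \<sigma> w \<le> R / (\<delta> * real (card W))" using R1 d0 m0 by (simp add: field_simps)
    have "1 \<le> (\<Sum>w'\<in>outW W F v. R * (\<rho> v * \<sigma> w))"
    proof -
      have "(\<Sum>w'\<in>outW W F v. \<rho> v * \<sigma> w') \<le> (\<Sum>w'\<in>outW W F v. R * (\<rho> v * \<sigma> w))"
      proof (intro sum_mono)
        fix w' assume "w' \<in> outW W F v"
        hence "\<sigma> w' \<le> R * \<sigma> w" using \<sigma>rat wW outW_sub by auto
        hence "\<rho> v * \<sigma> w' \<le> \<rho> v * (R * \<sigma> w)" using \<rho>pos v by (intro mult_left_mono) auto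
        thus "\<rho> v * \<sigma> w' \<le> R * (\<rho> v * \<sigma> w)" by (simp add: algebra_simps)
      qed
      thus ?thesis using row v by simp
    qed
    hence "1 \<le> real (card (outW W F v)) * (R * (\<rho> v * \<sigma> w))" by simp
    also have "\<dots> \<le> real (card W) * (R * (\<rho> v * \<sigma> w))"
      using card_mono[OF fin outW_sub] \<rho>pos \<sigma>pos v wW R1
      by (intro mult_right_mono) (auto intro!: mult_nonneg_nonneg less_imp_le)
    finally show "1 / (R * real (card W)) \<le> \<rho> v * \<sigma> w" using R1 m0 by (simp add: field_simps)
  qed
  have pbound: "1 / (R^2 * real (card W)) \<le> \<rho> v * \<sigma> w \<and> \<rho> v * \<sigma> w \<le> R^2 / (\<delta> * real (card W))"
    if v: "v \<in> W" and w: "w \<in> W" for v w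
  proof -
    obtain w' where w': "w' \<in> outW W F v" using outW_ne[OF v] by blast
    have w'W: "w' \<in> W" using w' outW_sub by auto
    have b: "1 / (R * real (card W)) \<le> \<rho> v * \<sigma> w'" "\<rho> v * \<sigma> w' \<le> R / (\<delta> * real (card W))"
      using ebound[OF v w'] by auto
    have "\<rho> v * \<sigma> w \<le> \<rho> v * (R * \<sigma> w')" using \<sigma>rat w w'W \<rho>pos v by (intro mult_left_mono) auto
    also have "\<dots> = R * (\<rho> v * \<sigma> w')" by simp
    also have "\<dots> \<le> R * (R / (\<delta> * real (card W)))" using b R1 by (intro mult_left_mono) auto
    finally have u: "\<rho> v * \<sigma> w \<le> R^2 / (\<delta> * real (card W))" by (simp add: power2_eq_square)
    have "\<rho> v * \<sigma> w' \<le> \<rho> v * (R * \<sigma> w)" using \<sigma>rat w w'W \<rho>pos v by (intro mult_left_mono) auto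
    hence "1 / (R * real (card W)) \<le> R * (\<rho> v * \<sigma> w)" using b by (simp add: algebra_simps)
    hence "1 / (R^2 * real (card W)) \<le> \<rho> v * \<sigma> w" using R1 m0 by (simp add: field_simps power2_eq_square)
    thus ?thesis using u by simp
  qed
  show ?thesis
    apply (rule exI[of _ \<rho>], rule exI[of _ \<sigma>])
    using \<rho>pos \<sigma>pos pm ent tot ebound pbound FW
    unfolding z_def R_def[symmetric]
    by (auto simp: outW_def)
qed

theorem lemma4p6:
  "\<forall>eps::real. 0 < eps \<and> eps \<le> 1 \<longrightarrow>
    (\<exists>b0::real. \<forall>b\<ge>b0. \<exists>n0::nat. \<forall>n\<ge>n0.
      \<forall>(V::nat set) (E::(nat \<times> nat) set) (A::nat set).
        n_eps_digraph n eps V E \<and> A \<subseteq> V \<and>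
        real (card A) \<le> real n / (log 2 (real n))^2 \<longrightarrow>
        (\<exists>z. perfect_frac_matching (V - A) (del_vertices_E V E A) z \<and>
             b_normal b (V - A) (del_vertices_E V E A) z \<and>
             entropy (del_vertices_E V E A) z \<ge> h_digraph V E - eps * real n))"
proof (intro allI impI)
  fix eps :: real assume "0 < eps \<and> eps \<le> 1"
  hence e0: "0 < eps" and e1: "eps \<le> 1" by auto
  define \<delta> where "\<delta> = 1/2 + eps/2"
  define R where "R = \<delta>/(2*\<delta>-1)"
  have d1: "1/2 < \<delta>" and d2: "\<delta> \<le> 1" using e0 e1 by (auto simp: \<delta>_def)
  have d0: "0 < \<delta>" using d1 by simp
  have R1: "1 \<le> R" using d1 d2 by (simp add: R_def field_simps)
  define C where "C = log 2 (R^2) + 4 * R^2 / (\<delta> * ln 2)"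
  have C0: "0 \<le> C"
  proof -
    have "0 \<le> log 2 (R^2)" using R1 by (subst zero_le_log_cancel_iff) (auto simp: one_le_power)
    moreover have "0 \<le> 4 * R^2 / (\<delta> * ln 2)" using d0 by (intro divide_nonneg_pos) auto
    ultimately show ?thesis by (simp add: C_def)
  qed
  define Lm where "Lm = max 1 (max (2/eps) (2*C/eps))"
  show "\<exists>b0::real. \<forall>b\<ge>b0. \<exists>n0::nat. \<forall>n\<ge>n0.
      \<forall>(V::nat set) (E::(nat \<times> nat) set) (A::nat set).
        n_eps_digraph n eps V E \<and> A \<subseteq> V \<and>
        real (card A) \<le> real n / (log 2 (real n))^2 \<longrightarrow>
        (\<exists>z. perfect_frac_matching (V - A) (del_vertices_E V E A) z \<and>
             b_normal b (V - A) (del_vertices_E V E A) z \<and>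
             entropy (del_vertices_E V E A) z \<ge> h_digraph V E - eps * real n)"
  proof (intro exI[of _ "R/\<delta>"] allI impI exI[of _ "nat \<lceil>2 powr Lm\<rceil>"])
    fix b :: real and n :: nat and V :: "nat set" and E :: "(nat \<times> nat) set" and A :: "nat set"
    assume bge: "R/\<delta> \<le> b" and nge: "nat \<lceil>2 powr Lm\<rceil> \<le> n"
      and H: "n_eps_digraph n eps V E \<and> A \<subseteq> V \<and> real (card A) \<le> real n / (log 2 (real n))^2"
    show "\<exists>z. perfect_frac_matching (V - A) (del_vertices_E V E A) z \<and>
             b_normal b (V - A) (del_vertices_E V E A) z \<and>
             entropy (del_vertices_E V E A) z \<ge> h_digraph V E - eps * real n"
    proof -
    have Lm1: "1 \<le> Lm" and Lm2: "2/eps \<le> Lm" and Lm3: "2*C/eps \<le> Lm" by (auto simp: Lm_def)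
    have n_ge: "2 powr Lm \<le> real n"
    proof -
      have "2 powr Lm \<le> real_of_int \<lceil>2 powr Lm\<rceil>" by simp
      also have "\<dots> \<le> real n" using nge by linarith
      finally show ?thesis .
    qed
    have "2 powr 1 \<le> 2 powr Lm" using Lm1 by (intro powr_mono) auto
    hence "2 \<le> 2 powr Lm" by simp
    hence n2: "2 \<le> real n" using n_ge by linarith
    define L where "L = log 2 (real n)"
    have LLm: "Lm \<le> L" unfolding L_def using n_ge n2 by (subst le_log_iff) auto
    have L1: "1 \<le> L" and L2: "2/eps \<le> L" and L3: "2*C/eps \<le> L" using LLm Lm1 Lm2 Lm3 by auto
    have L0: "0 < L" using L1 by simp
    obtain dig: "digraph V E" and cardV: "card V = n"
      and degs: "\<forall>v\<in>V. (1/2 + eps) * real n \<le> real (card (out_nbrs E v)) \<and> (1/2 + eps) * real n \<le> real (card (in_nbrs E v))"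
      using H by (auto simp: n_eps_digraph_def)
    have AV: "A \<subseteq> V" using H by simp
    have finV: "finite V" and EV: "E \<subseteq> V \<times> V" using dig by (auto simp: digraph_def)
    have finA: "finite A" using finV AV finite_subset by blast
    define a where "a = real (card A)"
    have a0: "0 \<le> a" by (simp add: a_def)
    have aL2: "a \<le> real n / L^2" using H by (simp add: a_def L_def)
    have "L \<le> L^2" using L1 by (simp add: power2_eq_square)
    hence "real n / L^2 \<le> real n / L" using L0 by (intro divide_left_mono) auto
    hence aL: "a \<le> real n / L" using aL2 by linarith
    have "real n / L \<le> eps * real n / 2"
    proof -
      have "1 / L \<le> eps / 2" using L2 e0 L0 by (simp add: field_simps)
      hence "real n * (1 / L) \<le> real n * (eps / 2)" by (intro mult_left_mono) auto
      thus ?thesis by (simp add: mult.commute)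
    qed
    hence a_eps: "a \<le> eps * real n / 2" using aL by linarith
    define W where "W = V - A"
    define F where "F = del_vertices_E V E A"
    have finW: "finite W" using finV by (simp add: W_def)
    have cardW: "real (card W) = real n - a"
    proof -
      have "card A \<le> card V" using AV finV by (rule card_mono[rotated])
      thus ?thesis using AV finA cardV by (simp add: W_def a_def card_Diff_subset of_nat_diff)
    qed
    have mge: "real n / 2 \<le> real (card W)" proof -
      have "eps * real n \<le> 1 * real n" using e1 by (intro mult_right_mono) auto
      thus ?thesis using cardW a_eps by linarith
    qed
    have m0: "0 < real (card W)" using mge n2 by linarith
    have Wne: "W \<noteq> {}" using m0 by auto
    have mn: "real (card W) \<le> real n" using cardW a0 by linarith
    have FW: "F \<subseteq> W \<times> W" by (auto simp: F_def W_def del_vertices_E_def)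
    have Fsub: "F \<subseteq> E" by (auto simp: F_def del_vertices_E_def)
    have dn: "\<delta> * real n = (1/2 + eps) * real n - eps * real n / 2" by (simp add: \<delta>_def algebra_simps)
    have dm: "\<delta> * real (card W) \<le> \<delta> * real n" using mn d0 by (intro mult_left_mono) auto
    have dout: "\<forall>v\<in>W. \<delta> * real (card W) \<le> real (card (outW W F v))"
    proof
      fix v assume v: "v \<in> W"
      have "out_nbrs E v \<subseteq> outW W F v \<union> A"
        using EV v by (auto simp: out_nbrs_def outW_def W_def F_def del_vertices_E_def)
      moreover have "finite (outW W F v \<union> A)" using finW finA by (auto simp: outW_def)
      ultimately have "card (out_nbrs E v) \<le> card (outW W F v \<union> A)" by (rule card_mono[rotated])
      also have "\<dots> \<le> card (outW W F v) + card A" by (rule card_Un_le)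
      finally have "real (card (out_nbrs E v)) \<le> real (card (outW W F v)) + a" by (simp add: a_def)
      moreover have "(1/2 + eps) * real n \<le> real (card (out_nbrs E v))" using degs v by (auto simp: W_def)
      ultimately show "\<delta> * real (card W) \<le> real (card (outW W F v))" using dn dm a_eps by linarith
    qed
    have din: "\<forall>w\<in>W. \<delta> * real (card W) \<le> real (card (inW W F w))"
    proof
      fix v assume v: "v \<in> W"
      have "in_nbrs E v \<subseteq> inW W F v \<union> A"
        using EV v by (auto simp: in_nbrs_def inW_def W_def F_def del_vertices_E_def)
      moreover have "finite (inW W F v \<union> A)" using finW finA by (auto simp: inW_def)
      ultimately have "card (in_nbrs E v) \<le> card (inW W F v \<union> A)" by (rule card_mono[rotated])
      also have "\<dots> \<le> card (inW W F v) + card A" by (rule card_Un_le)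
      finally have "real (card (in_nbrs E v)) \<le> real (card (inW W F v)) + a" by (simp add: a_def)
      moreover have "(1/2 + eps) * real n \<le> real (card (in_nbrs E v))" using degs v by (auto simp: W_def)
      ultimately show "\<delta> * real (card W) \<le> real (card (inW W F v))" using dn dm a_eps by linarith
    qed
    have doutV: "\<forall>v\<in>V. \<delta> * real (card V) \<le> real (card (outW V E v))"
    proof
      fix v assume v: "v \<in> V"
      have "outW V E v = out_nbrs E v" using EV by (auto simp: outW_def out_nbrs_def)
      thus "\<delta> * real (card V) \<le> real (card (outW V E v))" using degs v dn cardV e0 a_eps a0 by auto
    qed
    have dinV: "\<forall>v\<in>V. \<delta> * real (card V) \<le> real (card (inW V E v))"
    proof
      fix v assume v: "v \<in> V"
      have "inW V E v = in_nbrs E v" using EV by (auto simp: inW_def in_nbrs_def)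
      thus "\<delta> * real (card V) \<le> real (card (inW V E v))" using degs v dn cardV e0 a_eps a0 by auto
    qed
    have Vne: "V \<noteq> {}" using cardV n2 by auto
    obtain z0 where pm0: "perfect_frac_matching V E z0"
      using scaling_pfm[OF finV Vne EV d1 d2 doutV dinV] by blast
    obtain \<rho> \<sigma> where \<rho>pos: "\<forall>v\<in>W. 0 < \<rho> v" and \<sigma>pos: "\<forall>w\<in>W. 0 < \<sigma> w"
      and pm: "perfect_frac_matching W F (\<lambda>e. if e \<in> F then \<rho> (fst e) * \<sigma> (snd e) else 0)"
      and ent: "entropy F (\<lambda>e. if e \<in> F then \<rho> (fst e) * \<sigma> (snd e) else 0)
        = - (\<Sum>v\<in>W. log 2 (\<rho> v)) - (\<Sum>v\<in>W. log 2 (\<sigma> v))"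
      and tot: "(\<Sum>e\<in>F. \<rho> (fst e) * \<sigma> (snd e)) = real (card W)"
      and eb: "\<forall>e\<in>F. 1 / (R * real (card W)) \<le> \<rho> (fst e) * \<sigma> (snd e)
              \<and> \<rho> (fst e) * \<sigma> (snd e) \<le> R / (\<delta> * real (card W))"
      and pb: "\<forall>v\<in>W. \<forall>w\<in>W. 1 / (R^2 * real (card W)) \<le> \<rho> v * \<sigma> w
              \<and> \<rho> v * \<sigma> w \<le> R^2 / (\<delta> * real (card W))"
      using scaling_pfm[OF finW Wne FW d1 d2 dout din] unfolding R_def by blast
    define z where "z e = (if e \<in> F then \<rho> (fst e) * \<sigma> (snd e) else 0)" for e
    define Hu where "Hu = - (\<Sum>v\<in>W. log 2 (\<rho> v)) - (\<Sum>v\<in>W. log 2 (\<sigma> v))"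
    define M where "M = R^2 / (\<delta> * real (card W))"
    have M0: "0 \<le> M" using d0 m0 by (simp add: M_def)
    have bound: "entropy E x \<le> Hu + eps * real n" if px: "perfect_frac_matching V E x" for x
    proof -
      obtain v0 where v0: "v0 \<in> W" using Wne by blast
      define pv where "pv v = (if v \<in> W then v else v0)" for v
      have pvW: "pv v \<in> W" for v using v0 by (simp add: pv_def)
      define r where "r v = \<rho> (pv v)" for v
      define s where "s v = \<sigma> (pv v)" for v
      have rspos: "\<forall>v\<in>V. 0 < r v \<and> 0 < s v" using \<rho>pos \<sigma>pos pvW by (simp add: r_def s_def)
      have G: "entropy E x \<le> - (\<Sum>v\<in>V. log 2 (r v)) - (\<Sum>v\<in>V. log 2 (s v))
           + ((\<Sum>e\<in>E. r (fst e) * s (snd e)) - real (card V)) / ln 2"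
        by (rule gibbs[OF finV EV px rspos])
      have VWA: "V = W \<union> A" and WA: "W \<inter> A = {}" using AV by (auto simp: W_def)
      have sr: "(\<Sum>v\<in>V. log 2 (r v)) = (\<Sum>v\<in>W. log 2 (\<rho> v)) + a * log 2 (\<rho> v0)"
      proof -
        have "(\<Sum>v\<in>V. log 2 (r v)) = (\<Sum>v\<in>W. log 2 (r v)) + (\<Sum>v\<in>A. log 2 (r v))"
          unfolding VWA by (rule sum.union_disjoint[OF finW finA WA])
        moreover have "(\<Sum>v\<in>W. log 2 (r v)) = (\<Sum>v\<in>W. log 2 (\<rho> v))" by (simp add: r_def pv_def)
        moreover have "(\<Sum>v\<in>A. log 2 (r v)) = (\<Sum>v\<in>A. log 2 (\<rho> v0))"
          using WA by (intro sum.cong refl) (auto simp: r_def pv_def)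
        ultimately show ?thesis by (simp add: a_def)
      qed
      have ss: "(\<Sum>v\<in>V. log 2 (s v)) = (\<Sum>v\<in>W. log 2 (\<sigma> v)) + a * log 2 (\<sigma> v0)"
      proof -
        have "(\<Sum>v\<in>V. log 2 (s v)) = (\<Sum>v\<in>W. log 2 (s v)) + (\<Sum>v\<in>A. log 2 (s v))"
          unfolding VWA by (rule sum.union_disjoint[OF finW finA WA])
        moreover have "(\<Sum>v\<in>W. log 2 (s v)) = (\<Sum>v\<in>W. log 2 (\<sigma> v))" by (simp add: s_def pv_def)
        moreover have "(\<Sum>v\<in>A. log 2 (s v)) = (\<Sum>v\<in>A. log 2 (\<sigma> v0))"
          using WA by (intro sum.cong refl) (auto simp: s_def pv_def)
        ultimately show ?thesis by (simp add: a_def)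
      qed
      have finE: "finite E" using finV EV by (meson finite_SigmaI finite_subset)
      have sE: "(\<Sum>e\<in>E. r (fst e) * s (snd e)) \<le> real (card W) + 2 * a * real n * M"
      proof -
        have "(\<Sum>e\<in>E. r (fst e) * s (snd e)) = (\<Sum>e\<in>E - F. r (fst e) * s (snd e)) + (\<Sum>e\<in>F. r (fst e) * s (snd e))"
          by (rule sum.subset_diff[OF Fsub finE])
        moreover have "(\<Sum>e\<in>F. r (fst e) * s (snd e)) = real (card W)"
        proof -
          have "(\<Sum>e\<in>F. r (fst e) * s (snd e)) = (\<Sum>e\<in>F. \<rho> (fst e) * \<sigma> (snd e))"
            using FW by (intro sum.cong refl) (auto simp: r_def s_def pv_def)
          thus ?thesis using tot by simp
        qed
        moreover have "(\<Sum>e\<in>E - F. r (fst e) * s (snd e)) \<le> real (card (E - F)) * M"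
        proof (rule sum_bounded_above)
          fix e assume "e \<in> E - F"
          show "r (fst e) * s (snd e) \<le> M" using pb pvW by (simp add: r_def s_def M_def)
        qed
        moreover have "real (card (E - F)) \<le> 2 * a * real n"
        proof -
          have "E - F \<subseteq> (A \<times> V) \<union> (V \<times> A)"
            using EV by (auto simp: F_def W_def del_vertices_E_def)
          moreover have "finite ((A \<times> V) \<union> (V \<times> A))" using finA finV by simp
          ultimately have "card (E - F) \<le> card ((A \<times> V) \<union> (V \<times> A))" by (rule card_mono[rotated])
          also have "\<dots> \<le> card (A \<times> V) + card (V \<times> A)" by (rule card_Un_le)
          also have "\<dots> = 2 * card A * n" using cardV by (simp add: card_cartesian_product)
          finally have "card (E - F) \<le> 2 * card A * n" .
          hence "real (card (E - F)) \<le> real (2 * card A * n)" by (simp only: of_nat_le_iff)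
          thus ?thesis by (simp add: a_def)
        qed
        ultimately show ?thesis using M0 by (smt (verit) mult_right_mono)
      qed
      have ln2: "0 < ln (2::real)" by simp
      have E1: "entropy E x \<le> Hu - a * (log 2 (\<rho> v0) + log 2 (\<sigma> v0)) + (2 * a * real n * M - a) / ln 2"
      proof -
        have "((\<Sum>e\<in>E. r (fst e) * s (snd e)) - real (card V)) / ln 2 \<le> (real (card W) + 2 * a * real n * M - real n) / ln 2"
          using sE cardV ln2 by (intro divide_right_mono) auto
        also have "\<dots> = (2 * a * real n * M - a) / ln 2" using cardW by simp
        finally show ?thesis using G sr ss by (simp add: Hu_def algebra_simps)
      qed
      have pv0: "1 / (R^2 * real (card W)) \<le> \<rho> v0 * \<sigma> v0" using pb v0 by blast
      have pv0pos: "0 < 1 / (R^2 * real (card W))" using m0 R1 by simp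
      have l1: "- (log 2 (\<rho> v0) + log 2 (\<sigma> v0)) \<le> log 2 (R^2) + L"
      proof -
        have "log 2 (1 / (R^2 * real (card W))) \<le> log 2 (\<rho> v0 * \<sigma> v0)"
        proof -
          have pp: "0 < \<rho> v0 * \<sigma> v0" using pv0 pv0pos by linarith
          have "(2::real) > 1" by simp
          from log_le_cancel_iff[OF this pv0pos pp] pv0 show ?thesis by blast
        qed
        moreover have "log 2 (\<rho> v0 * \<sigma> v0) = log 2 (\<rho> v0) + log 2 (\<sigma> v0)"
          using \<rho>pos \<sigma>pos v0 by (intro log_mult_pos) auto
        moreover have "log 2 (1 / (R^2 * real (card W))) = - (log 2 (R^2) + log 2 (real (card W)))"
          using R1 m0 by (simp add: log_divide_pos log_mult_pos)
        moreover have "log 2 (real (card W)) \<le> L" unfolding L_def using mn m0 by (subst log_le_cancel_iff) auto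
        ultimately show ?thesis by linarith
      qed
      have l2: "2 * a * real n * M \<le> a * (4 * R^2 / \<delta>)"
      proof -
        have "2 * real n * M = 2 * real n * R^2 / (\<delta> * real (card W))" by (simp add: M_def)
        also have "\<dots> \<le> 4 * real (card W) * R^2 / (\<delta> * real (card W))"
        proof (intro divide_right_mono)
          have "real n * R^2 \<le> (2 * real (card W)) * R^2" using mge by (intro mult_right_mono) auto
          thus "2 * real n * R\<^sup>2 \<le> 4 * real (card W) * R\<^sup>2" by simp
        qed (use d0 m0 in auto)
        also have "\<dots> = 4 * R^2 / \<delta>" using m0 by simp
        finally have "2 * real n * M \<le> 4 * R^2 / \<delta>" .
        hence "a * (2 * real n * M) \<le> a * (4 * R^2 / \<delta>)" using a0 by (intro mult_left_mono) auto
        thus ?thesis by (simp add: algebra_simps)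
      qed
      have E2: "entropy E x \<le> Hu + a * (C + L)"
      proof -
        have "(2 * a * real n * M - a) / ln 2 \<le> (a * (4 * R^2 / \<delta>)) / ln 2"
          using l2 a0 ln2 by (intro divide_right_mono) auto
        also have "\<dots> = a * (4 * R^2 / (\<delta> * ln 2))" by simp
        finally have A1: "(2 * a * real n * M - a) / ln 2 \<le> a * (4 * R^2 / (\<delta> * ln 2))" .
        have A2: "- a * (log 2 (\<rho> v0) + log 2 (\<sigma> v0)) \<le> a * (log 2 (R^2) + L)"
          using l1 a0 by (metis minus_mult_commute mult_left_mono)
        show ?thesis using E1 A1 A2 by (simp add: C_def algebra_simps)
      qed
      have l3: "a * (C + L) \<le> eps * real n"
      proof -
        have "a * L \<le> real n / L^2 * L" using aL2 L0 by (intro mult_right_mono) auto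
        also have "\<dots> = real n / L" using L0 by (simp add: power2_eq_square)
        also have "\<dots> \<le> eps * real n / 2" by fact
        finally have B1: "a * L \<le> eps * real n / 2" .
        have "a * C \<le> real n / L^2 * C" using aL2 C0 by (intro mult_right_mono) auto
        also have "\<dots> = (real n / L) * (C / L)" by (simp add: power2_eq_square)
        also have "\<dots> \<le> (real n / L) * (eps / 2)"
        proof (intro mult_left_mono)
          show "C / L \<le> eps / 2" using L3 L0 e0 by (simp add: field_simps)
        qed (use L0 in auto)
        also have "\<dots> \<le> real n * (eps / 2)"
        proof (intro mult_right_mono)
          have "real n * 1 \<le> real n * L" using L1 by (intro mult_left_mono) auto
          thus "real n / L \<le> real n" using L0 by (simp add: divide_le_eq mult.commute)
        qed (use e0 in auto)
        finally have B2: "a * C \<le> eps * real n / 2" by (simp add: mult.commute)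
        show ?thesis using B1 B2 by (simp add: algebra_simps)
      qed
      show ?thesis using E2 l3 by linarith
    qed
    have hle: "h_digraph V E \<le> Hu + eps * real n"
      unfolding h_digraph_def
    proof (rule cSup_least)
      show "entropy E ` {x. perfect_frac_matching V E x} \<noteq> {}" using pm0 by auto
    next
      fix y assume "y \<in> entropy E ` {x. perfect_frac_matching V E x}"
      thus "y \<le> Hu + eps * real n" using bound by auto
    qed
    have bR: "R \<le> b"
    proof -
      have "R * 1 \<le> R * (1 / \<delta>)" using R1 d0 d2 by (intro mult_left_mono) (auto simp: field_simps)
      thus ?thesis using bge by simp
    qed
    have b0: "0 < b" using bR R1 by simp
    have bn: "b_normal b W F z"
      unfolding b_normal_def
    proof
      fix e assume e: "e \<in> F"
      have "1 / (b * real (card W)) \<le> 1 / (R * real (card W))"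
        using bR R1 m0 by (intro divide_left_mono mult_right_mono mult_pos_pos) auto
      moreover have "R / (\<delta> * real (card W)) \<le> b / real (card W)"
      proof -
        have "R / (\<delta> * real (card W)) = (R / \<delta>) / real (card W)" by simp
        also have "\<dots> \<le> b / real (card W)" using bge m0 by (intro divide_right_mono) auto
        finally show ?thesis .
      qed
      ultimately show "1 / (b * real (card W)) \<le> z e \<and> z e \<le> b / real (card W)"
        using eb e by (auto simp: z_def)
    qed
    have zeq: "z = (\<lambda>e. if e \<in> F then \<rho> (fst e) * \<sigma> (snd e) else 0)" by (rule ext) (simp add: z_def)
    show ?thesis
    proof (intro exI[of _ z] conjI)
      show "perfect_frac_matching (V - A) (del_vertices_E V E A) z" using pm zeq by (simp add: W_def F_def)
      show "b_normal b (V - A) (del_vertices_E V E A) z" using bn by (simp add: W_def F_def)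
      have "entropy F z = Hu" using ent zeq by (simp add: Hu_def)
      thus "h_digraph V E - eps * real n \<le> entropy (del_vertices_E V E A) z" using hle by (simp add: F_def)
    qed
    qed
  qed
qed

end
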